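(* Let $p$ be a prime and $M$ an $m'\times m$ matrix over $\mathbb{F}_p$. Let $1\le L\le p$ be an integer and $\mathbf{L}=(L_1,\dots,L_m)$ integers with $L\le L_i\le2L$. For $\mathbf{b}\in\mathbb{Z}^{m'}$ and $D\subseteq\mathbb{Z}^m$ set $S(\mathbf{b};D)=\{\mathbf{x}\in D: M\mathbf{x}\equiv\mathbf{b}\pmod p\}$. Then for every $\mathbf{N}\in\mathbb{Z}^m$ and every $\mathbf{b}$, $$|S(\mathbf{b};[\mathbf{N},\mathbf{N}+\mathbf{L}])|\le|S(\mathbf{0};[-\mathbf{L},\mathbf{L}])|,$$ and if $M$ has rank $\min\{m',m\}$ over $\mathbb{F}_p$, then $$|S(\mathbf{0};[-\mathbf{L},\mathbf{L}])|\ll_mL^{\dim\ker M},$$ where $\ker M$ is the kernel of $M$ acting on $\mathbb{F}_p^m$.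
   Context: $[\mathbf{N},\mathbf{N}+\mathbf{L}]=\prod_{i=1}^m\{x\in\mathbb{Z}:N_i\le x\le N_i+L_i\}$ and $[-\mathbf{L},\mathbf{L}]=\prod_{i=1}^m\{x\in\mathbb{Z}:-L_i\le x\le L_i\}$. *)

theory Defs
  imports "HOL-Number_Theory.Number_Theory"
begin

text \<open>Vectors in Z^n are functions nat => int, relevant on indices < n.
  An m' x m matrix over F_p is given by integer entries M r j (r < m', j < m), read mod p.\<close>

definition mat_vec_cong :: "int \<Rightarrow> nat \<Rightarrow> nat \<Rightarrow> (nat \<Rightarrow> nat \<Rightarrow> int) \<Rightarrow> (nat \<Rightarrow> int) \<Rightarrow> (nat \<Rightarrow> int) \<Rightarrow> bool" where
  "mat_vec_cong p m' m M x b \<longleftrightarrow> (\<forall>r<m'. [(\<Sum>j<m. M r j * x j) = b r] (mod p))"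

definition Ssol :: "int \<Rightarrow> nat \<Rightarrow> nat \<Rightarrow> (nat \<Rightarrow> nat \<Rightarrow> int) \<Rightarrow> (nat \<Rightarrow> int) \<Rightarrow> (nat \<Rightarrow> int) set \<Rightarrow> (nat \<Rightarrow> int) set" where
  "Ssol p m' m M b D = {x \<in> D. mat_vec_cong p m' m M x b}"

definition box :: "nat \<Rightarrow> (nat \<Rightarrow> int) \<Rightarrow> (nat \<Rightarrow> int) \<Rightarrow> (nat \<Rightarrow> int) set" where
  "box m lo hi = {x. (\<forall>i<m. lo i \<le> x i \<and> x i \<le> hi i) \<and> (\<forall>i\<ge>m. x i = 0)}"

definition lin_indep_mod :: "int \<Rightarrow> nat \<Rightarrow> (nat \<Rightarrow> nat \<Rightarrow> int) \<Rightarrow> nat \<Rightarrow> bool" where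
  "lin_indep_mod p n vs k \<longleftrightarrow>
     (\<forall>c :: nat \<Rightarrow> int. (\<forall>j<n. [(\<Sum>i<k. c i * vs i j) = 0] (mod p)) \<longrightarrow> (\<forall>i<k. [c i = 0] (mod p)))"

definition rank_mod :: "int \<Rightarrow> nat \<Rightarrow> nat \<Rightarrow> (nat \<Rightarrow> nat \<Rightarrow> int) \<Rightarrow> nat" where
  "rank_mod p m' m M = Max {k. \<exists>f. (\<forall>i<k. f i < m) \<and> lin_indep_mod p m' (\<lambda>i r. M r (f i)) k}"

definition ker_dim_mod :: "int \<Rightarrow> nat \<Rightarrow> nat \<Rightarrow> (nat \<Rightarrow> nat \<Rightarrow> int) \<Rightarrow> nat" where
  "ker_dim_mod p m' m M = Max {k. \<exists>vs. (\<forall>i<k. mat_vec_cong p m' m M (vs i) (\<lambda>_. 0)) \<and> lin_indep_mod p m vs k}"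

end

theory Submission
  imports Defs
begin


lemma nz_mult:
  fixes p a b :: int
  assumes "prime p" "\<not> [a = 0] (mod p)" "\<not> [b = 0] (mod p)"
  shows "\<not> [a * b = 0] (mod p)"
  using assms by (simp add: cong_0_iff prime_dvd_mult_iff)

lemma dep:
  fixes p :: int and vs :: "nat \<Rightarrow> nat \<Rightarrow> int"
  assumes p: "prime p"
  shows "finite I \<Longrightarrow> card I > n \<Longrightarrow> \<exists>c. (\<forall>j<n. [(\<Sum>i\<in>I. c i * vs i j) = 0] (mod p)) \<and> (\<exists>i\<in>I. \<not> [c i = 0] (mod p))"
proof (induction n arbitrary: I vs)
  case 0
  then obtain i where "i \<in> I" by fastforce
  moreover have "\<not> [1 = 0] (mod p)" using p by (metis cong_0_iff not_prime_unit)
  ultimately show ?case by (intro exI[of _ "\<lambda>_. 1"]) auto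
next
  case (Suc n)
  show ?case
  proof (cases "\<forall>i\<in>I. [vs i n = 0] (mod p)")
    case True
    from Suc.IH[of I vs] Suc.prems obtain c where
      c: "\<forall>j<n. [(\<Sum>i\<in>I. c i * vs i j) = 0] (mod p)" "\<exists>i\<in>I. \<not> [c i = 0] (mod p)" by auto
    have "[(\<Sum>i\<in>I. c i * vs i n) = (\<Sum>i\<in>I. c i * 0)] (mod p)"
      by (intro cong_sum cong_scalar_left) (use True in auto)
    then have "[(\<Sum>i\<in>I. c i * vs i n) = 0] (mod p)" by simp
    with c show ?thesis by (intro exI[of _ c]) (auto simp: less_Suc_eq)
  next
    case False
    then obtain i0 where i0: "i0 \<in> I" "\<not> [vs i0 n = 0] (mod p)" by auto
    define a where "a = vs i0 n"
    define I' where "I' = I - {i0}"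
    define w where "w = (\<lambda>i j. a * vs i j - vs i n * vs i0 j)"
    have fI': "finite I'" "card I' > n" using Suc.prems i0 unfolding I'_def by auto
    from Suc.IH[OF fI'] obtain c' where
      c': "\<forall>j<n. [(\<Sum>i\<in>I'. c' i * w i j) = 0] (mod p)" "\<exists>i\<in>I'. \<not> [c' i = 0] (mod p)" by blast
    define c where "c = (\<lambda>i. if i = i0 then - (\<Sum>i\<in>I'. c' i * vs i n) else c' i * a)"
    have eq: "(\<Sum>i\<in>I. c i * vs i j) = (\<Sum>i\<in>I'. c' i * w i j)" for j
    proof -
      have "(\<Sum>i\<in>I. c i * vs i j) = c i0 * vs i0 j + (\<Sum>i\<in>I'. c i * vs i j)"
        using Suc.prems i0 unfolding I'_def by (simp add: sum.remove)
      also have "(\<Sum>i\<in>I'. c i * vs i j) = (\<Sum>i\<in>I'. c' i * a * vs i j)"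
        unfolding c_def I'_def by (intro sum.cong) auto
      finally show ?thesis
        unfolding c_def w_def a_def
        by (simp add: algebra_simps sum_subtractf sum_distrib_left sum_distrib_right)
    qed
    have wn: "w i n = 0" for i unfolding w_def a_def by simp
    have "\<forall>j<Suc n. [(\<Sum>i\<in>I. c i * vs i j) = 0] (mod p)"
      using c' by (auto simp: less_Suc_eq eq wn)
    moreover from c' obtain i where i: "i \<in> I'" "\<not> [c' i = 0] (mod p)" by blast
    then have "\<not> [c i = 0] (mod p)" "i \<in> I"
      using nz_mult[OF p i(2) i0(2)[folded a_def]] unfolding c_def I'_def by auto
    ultimately show ?thesis by blast
  qed
qed

lemma indep_bound:
  assumes "prime p" "lin_indep_mod p n vs k" shows "k \<le> n"
proof (rule ccontr)
  assume "\<not> k \<le> n"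
  then obtain c where c: "\<forall>j<n. [(\<Sum>i<k. c i * vs i j) = 0] (mod p)" "\<exists>i<k. \<not> [c i = 0] (mod p)"
    using dep[OF assms(1), of "{..<k}" n vs] by auto
  with assms(2) show False unfolding lin_indep_mod_def by blast
qed


lemma box_fin_card:
  assumes "\<And>i. i<m \<Longrightarrow> finite (A i)"
  shows "finite {y::nat\<Rightarrow>int. (\<forall>i<m. y i \<in> A i) \<and> (\<forall>i\<ge>m. y i = 0)}"
    "card {y::nat\<Rightarrow>int. (\<forall>i<m. y i \<in> A i) \<and> (\<forall>i\<ge>m. y i = 0)} \<le> (\<Prod>i<m. card (A i))"
proof -
  let ?S = "{y::nat\<Rightarrow>int. (\<forall>i<m. y i \<in> A i) \<and> (\<forall>i\<ge>m. y i = 0)}"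
  have inj: "inj_on (\<lambda>y. restrict y {..<m}) ?S"
  proof (rule inj_onI)
    fix x y assume "x \<in> ?S" "y \<in> ?S" "restrict x {..<m} = restrict y {..<m}"
    then show "x = y"
    proof (intro ext)
      fix i assume h: "x \<in> ?S" "y \<in> ?S" "restrict x {..<m} = restrict y {..<m}"
      show "x i = y i"
      proof (cases "i < m")
        case True then show ?thesis using fun_cong[OF h(3), of i] by simp
      next
        case False then show ?thesis using h(1,2) by simp
      qed
    qed
  qed
  have sub: "(\<lambda>y. restrict y {..<m}) ` ?S \<subseteq> PiE {..<m} A"
    by (rule image_subsetI) (simp add: restrict_PiE_iff)
  have fin: "finite (PiE {..<m} A)" using assms by (intro finite_PiE) auto
  show "finite ?S" using finite_imageD[OF finite_subset[OF sub fin] inj] .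
  show "card ?S \<le> (\<Prod>i<m. card (A i))"
    using card_inj_on_le[OF inj sub fin] card_PiE[of "{..<m}" A] by simp
qed

lemma box_finite: "finite (box m lo hi)"
proof -
  have "box m lo hi = {y::nat\<Rightarrow>int. (\<forall>i<m. y i \<in> {lo i..hi i}) \<and> (\<forall>i\<ge>m. y i = 0)}"
    unfolding box_def by auto
  then show ?thesis using box_fin_card(1)[of m "\<lambda>i. {lo i..hi i}"] by simp
qed

lemma part1:
  assumes "\<forall>i<m. 0 \<le> Ls i"
  shows "card (Ssol p m' m M b (box m N (\<lambda>i. N i + Ls i)))
              \<le> card (Ssol p m' m M (\<lambda>_. 0) (box m (\<lambda>i. - Ls i) Ls))"
proof (cases "Ssol p m' m M b (box m N (\<lambda>i. N i + Ls i)) = {}")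
  case True then show ?thesis by simp
next
  case False
  then obtain x0 where x0: "x0 \<in> Ssol p m' m M b (box m N (\<lambda>i. N i + Ls i))" by blast
  let ?g = "\<lambda>x i. x i - x0 i"
  have inj: "inj_on ?g (Ssol p m' m M b (box m N (\<lambda>i. N i + Ls i)))"
    by (rule inj_onI) (auto simp: fun_eq_iff)
  have sub: "?g ` Ssol p m' m M b (box m N (\<lambda>i. N i + Ls i)) \<subseteq> Ssol p m' m M (\<lambda>_. 0) (box m (\<lambda>i. - Ls i) Ls)"
  proof
    fix y assume "y \<in> ?g ` Ssol p m' m M b (box m N (\<lambda>i. N i + Ls i))"
    then obtain x where x: "x \<in> Ssol p m' m M b (box m N (\<lambda>i. N i + Ls i))" and y: "y = ?g x" by blast
    have "y \<in> box m (\<lambda>i. - Ls i) Ls"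
      unfolding box_def
    proof (intro CollectI conjI allI impI)
      fix i assume i: "i < m"
      have "N i \<le> x i" "x i \<le> N i + Ls i" "N i \<le> x0 i" "x0 i \<le> N i + Ls i"
        using x x0 i unfolding Ssol_def box_def by auto
      then show "- Ls i \<le> y i" "y i \<le> Ls i" unfolding y by linarith+
    next
      fix i assume "m \<le> i" then show "y i = 0" using x x0 unfolding y Ssol_def box_def by auto
    qed
    moreover have "mat_vec_cong p m' m M y (\<lambda>_. 0)"
      unfolding mat_vec_cong_def
    proof (intro allI impI)
      fix r assume r: "r < m'"
      have "(\<Sum>j<m. M r j * y j) = (\<Sum>j<m. M r j * x j) - (\<Sum>j<m. M r j * x0 j)"
        unfolding y by (simp add: algebra_simps sum_subtractf)
      moreover have "[(\<Sum>j<m. M r j * x j) - (\<Sum>j<m. M r j * x0 j) = b r - b r] (mod p)"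
        using x x0 r unfolding Ssol_def mat_vec_cong_def by (intro cong_diff) auto
      ultimately show "[(\<Sum>j<m. M r j * y j) = 0] (mod p)" by simp
    qed
    ultimately show "y \<in> Ssol p m' m M (\<lambda>_. 0) (box m (\<lambda>i. - Ls i) Ls)" unfolding Ssol_def by auto
  qed
  have fin: "finite (Ssol p m' m M (\<lambda>_. 0) (box m (\<lambda>i. - Ls i) Ls))"
    unfolding Ssol_def using box_finite by simp
  show ?thesis by (rule card_inj_on_le[OF inj sub fin])
qed


lemma atMost_insert: "{..(n::nat)} = insert n {..<n}" by auto

lemma part2:
  fixes p L :: int
  assumes p: "prime p" and L: "1 \<le> L" "L \<le> p" and Ls: "\<forall>i<m. L \<le> Ls i \<and> Ls i \<le> 2*L"
    and rk: "rank_mod p m' m M = min m' m"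
  shows "real (card (Ssol p m' m M (\<lambda>_. 0) (box m (\<lambda>i. - Ls i) Ls)))
              \<le> 5^m * real_of_int L ^ ker_dim_mod p m' m M"
proof -
  define R where "R = {k. \<exists>f. (\<forall>i<k. f i < m) \<and> lin_indep_mod p m' (\<lambda>i r. M r (f i)) k}"
  have "R \<subseteq> {..m'}" using indep_bound[OF p] unfolding R_def by auto
  hence finR: "finite R" using finite_subset by blast
  have "0 \<in> R" unfolding R_def lin_indep_mod_def by auto
  hence "Max R \<in> R" using finR Max_in by blast
  define k where "k = min m' m"
  have "k \<in> R" using \<open>Max R \<in> R\<close> rk unfolding rank_mod_def R_def k_def by simp
  then obtain f where f: "\<forall>i<k. f i < m" and ind: "lin_indep_mod p m' (\<lambda>i r. M r (f i)) k"
    unfolding R_def by blast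
  have one_nz: "\<not> [1 = 0] (mod p)" using p by (metis cong_0_iff not_prime_unit)
  have injf: "inj_on f {..<k}"
  proof (rule inj_onI, rule ccontr)
    fix a b assume a: "a \<in> {..<k}" "b \<in> {..<k}" "f a = f b" "a \<noteq> b"
    define c :: "nat \<Rightarrow> int" where "c = (\<lambda>i. if i = a then 1 else if i = b then -1 else 0)"
    have "(\<Sum>i<k. c i * M r (f i)) = 0" for r
    proof -
      have "(\<Sum>i<k. c i * M r (f i)) = (\<Sum>i<k. (if i = a then M r (f a) else 0) - (if i = b then M r (f b) else 0))"
        using a by (intro sum.cong) (auto simp: c_def)
      also have "\<dots> = 0" using a by (simp add: sum_subtractf)
      finally show ?thesis .
    qed
    then have "[c a = 0] (mod p)" using ind a unfolding lin_indep_mod_def by auto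
    then show False using one_nz by (simp add: c_def)
  qed
  define P where "P = f ` {..<k}"
  define F where "F = {..<m} - P"
  have Psub: "P \<subseteq> {..<m}" using f P_def by auto
  have cardP: "card P = k" unfolding P_def using card_image[OF injf] by simp
  have finF: "finite F" unfolding F_def by simp
  have Fsub: "F \<subseteq> {..<m}" unfolding F_def by auto
  have p0: "p > 0" using p prime_gt_0_int by blast
  define S0 where "S0 = Ssol p m' m M (\<lambda>_. 0) (box m (\<lambda>i. - Ls i) Ls)"
  define A where "A = (\<lambda>i. if i \<in> P then {0..4::int} else {-2*L..2*L})"
  define \<phi> where "\<phi> = (\<lambda>(x::nat\<Rightarrow>int) i. if i \<in> P then (x i + 2*L) div p else x i)"
  define T where "T = {y::nat\<Rightarrow>int. (\<forall>i<m. y i \<in> A i) \<and> (\<forall>i\<ge>m. y i = 0)}"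
  have inj: "inj_on \<phi> S0"
  proof (rule inj_onI)
    fix x y assume x: "x \<in> S0" and y: "y \<in> S0" and e: "\<phi> x = \<phi> y"
    define z where "z = (\<lambda>i. x i - y i)"
    have zF: "z l = 0" if "l \<notin> P" for l using fun_cong[OF e, of l] that unfolding z_def \<phi>_def by auto
    have zc: "[(\<Sum>l<m. M r l * z l) = 0] (mod p)" if r: "r < m'" for r
    proof -
      have "(\<Sum>j<m. M r j * z j) = (\<Sum>j<m. M r j * x j) - (\<Sum>j<m. M r j * y j)"
        unfolding z_def by (simp add: algebra_simps sum_subtractf)
      moreover have "[(\<Sum>j<m. M r j * x j) - (\<Sum>j<m. M r j * y j) = 0 - 0] (mod p)"
        using x y r unfolding S0_def Ssol_def mat_vec_cong_def by (intro cong_diff) auto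
      ultimately show ?thesis by simp
    qed
    have eqs: "(\<Sum>l<m. M r l * z l) = (\<Sum>i<k. z (f i) * M r (f i))" for r
    proof -
      have "(\<Sum>l<m. M r l * z l) = (\<Sum>l\<in>P. M r l * z l)"
        by (rule sum.mono_neutral_right) (auto simp: Psub zF)
      also have "\<dots> = (\<Sum>i<k. z (f i) * M r (f i))"
        unfolding P_def by (simp add: sum.reindex[OF injf] mult.commute)
      finally show ?thesis .
    qed
    have "\<forall>r<m'. [(\<Sum>i<k. z (f i) * M r (f i)) = 0] (mod p)"
    proof (intro allI impI)
      fix r assume "r < m'"
      from zc[OF this] show "[(\<Sum>i<k. z (f i) * M r (f i)) = 0] (mod p)" unfolding eqs .
    qed
    then have zP: "\<forall>i<k. [z (f i) = 0] (mod p)"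
      using ind[unfolded lin_indep_mod_def, rule_format, of "\<lambda>i. z (f i)"] by simp
    show "x = y"
    proof (rule ext)
      fix l show "x l = y l"
      proof (cases "l \<in> P")
        case False then show ?thesis using zF[OF False] unfolding z_def by simp
      next
        case True
        then obtain i where i: "i < k" "l = f i" by (auto simp: P_def)
        then have "[z l = 0] (mod p)" using zP by auto
        then have "[x l = y l] (mod p)" unfolding z_def cong_0_iff cong_iff_dvd_diff[of "x l"] .
        then have "[x l + 2*L = y l + 2*L] (mod p)" by (simp add: cong_add_rcancel)
        then have m: "(x l + 2*L) mod p = (y l + 2*L) mod p" by (simp add: cong_def)
        have d: "(x l + 2*L) div p = (y l + 2*L) div p" using fun_cong[OF e, of l] True \<phi>_def by simp
        have "x l + 2*L = y l + 2*L" by (metis div_mult_mod_eq m d)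
        then show ?thesis by simp
      qed
    qed
  qed
  have sub: "\<phi> ` S0 \<subseteq> T"
  proof (rule image_subsetI)
    fix x assume x: "x \<in> S0"
    show "\<phi> x \<in> T" unfolding T_def
    proof (intro CollectI conjI allI impI)
      fix i assume i: "i < m"
      have b: "- Ls i \<le> x i" "x i \<le> Ls i" using x i unfolding S0_def Ssol_def box_def by auto
      have b2: "L \<le> Ls i" "Ls i \<le> 2*L" using Ls i by auto
      show "\<phi> x i \<in> A i"
      proof (cases "i \<in> P")
        case True
        have "0 \<le> x i + 2*L" "x i + 2*L \<le> 4 * p" using b b2 L by linarith+
        then have "0 \<le> (x i + 2*L) div p" "(x i + 2*L) div p \<le> (4*p) div p"
          using p0 zdiv_mono1[of "x i + 2*L" "4*p" p] by (simp_all add: pos_imp_zdiv_nonneg_iff)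
        then show ?thesis using True p0 unfolding \<phi>_def A_def by simp
      next
        case False then show ?thesis using b b2 unfolding \<phi>_def A_def by simp
      qed
    next
      fix i assume i: "m \<le> i"
      then have "i \<notin> P" using Psub by auto
      then show "\<phi> x i = 0" using x i unfolding \<phi>_def S0_def Ssol_def box_def by auto
    qed
  qed
  have finT: "finite T" and cardT: "card T \<le> (\<Prod>i<m. card (A i))"
    using box_fin_card[of m A] unfolding T_def A_def by auto
  have "card S0 \<le> (\<Prod>i<m. card (A i))" using card_inj_on_le[OF inj sub finT] cardT by linarith
  also have "\<dots> \<le> (\<Prod>i<m. 5 * (if i \<in> F then nat L else 1))"
  proof (rule prod_mono, intro conjI)
    fix i assume i: "i \<in> {..<m}"
    show "card (A i) \<le> 5 * (if i \<in> F then nat L else 1)"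
    proof (cases "i \<in> P")
      case True then show ?thesis unfolding A_def F_def by simp
    next
      case False then have "i \<in> F" using i unfolding F_def by auto
      then show ?thesis using False L unfolding A_def by simp
    qed
  qed simp
  also have "\<dots> = 5^m * nat L ^ card F"
  proof -
    have "{..<m} \<inter> {i. i \<in> F} = F" using Fsub by auto
    then have "(\<Prod>i<m. (if i \<in> F then nat L else 1)) = nat L ^ card F"
      by (simp add: prod.If_cases)
    then show ?thesis by (simp add: prod.distrib)
  qed
  finally have cnt: "card S0 \<le> 5^m * nat L ^ card F" .

  define K where "K = {k. \<exists>vs. (\<forall>i<k. mat_vec_cong p m' m M (vs i) (\<lambda>_. 0)) \<and> lin_indep_mod p m vs k}"
  have "K \<subseteq> {..m}" using indep_bound[OF p] unfolding K_def by auto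
  hence finK: "finite K" using finite_subset by blast
  have K0: "0 \<in> K" unfolding K_def lin_indep_mod_def by auto
  have "card F \<in> K"
  proof (cases "m \<le> m'")
    case True
    then have "k = m" by (simp add: k_def)
    then have "card F = 0" unfolding F_def using Psub cardP
      by (simp add: card_Diff_subset finite_subset)
    then show ?thesis using K0 by simp
  next
    case False
    then have km: "k = m'" by (simp add: k_def)
    define g where "g = (\<lambda>j i. if i < m' then f i else j)"
    have gsum: "(\<Sum>i\<le>m'. c i * M r (g j i)) = (\<Sum>i<m'. c i * M r (f i)) + c m' * M r j" for c r j
    proof -
      have "(\<Sum>i\<le>m'. c i * M r (g j i)) = (\<Sum>i<m'. c i * M r (g j i)) + c m' * M r (g j m')"
        by (simp add: atMost_insert)
      also have "(\<Sum>i<m'. c i * M r (g j i)) = (\<Sum>i<m'. c i * M r (f i))"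
        by (intro sum.cong) (auto simp: g_def)
      finally show ?thesis by (simp add: g_def)
    qed
    have "\<forall>j\<in>F. \<exists>c::nat\<Rightarrow>int. (\<forall>r<m'. [(\<Sum>i\<le>m'. c i * M r (g j i)) = 0] (mod p)) \<and> \<not> [c m' = 0] (mod p)"
    proof
      fix j assume j: "j \<in> F"
      obtain c where c: "\<forall>r<m'. [(\<Sum>i\<in>{..m'}. c i * M r (g j i)) = 0] (mod p)"
          "\<exists>i\<in>{..m'}. \<not>[c i = 0] (mod p)"
        using dep[OF p, of "{..m'}" m' "\<lambda>i r. M r (g j i)"] by auto
      have "\<not> [c m' = 0] (mod p)"
      proof
        assume c0: "[c m' = 0] (mod p)"
        have "[(\<Sum>i<m'. c i * M r (f i)) = 0] (mod p)" if r: "r < m'" for r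
        proof -
          have "[c m' * M r j = 0 * M r j] (mod p)" using c0 by (rule cong_scalar_right)
          then have h2: "[c m' * M r j = 0] (mod p)" by simp
          have h1: "[(\<Sum>i<m'. c i * M r (f i)) + c m' * M r j = 0] (mod p)"
            using c(1)[rule_format, OF r] unfolding gsum .
          from cong_diff[OF h1 h2] show ?thesis by simp
        qed
        then have "\<forall>i<m'. [c i = 0] (mod p)" using ind km unfolding lin_indep_mod_def by auto
        moreover obtain i where "i \<le> m'" "\<not>[c i = 0] (mod p)" using c(2) by auto
        ultimately show False using c0 by (cases "i = m'") auto
      qed
      with c show "\<exists>c::nat\<Rightarrow>int. (\<forall>r<m'. [(\<Sum>i\<le>m'. c i * M r (g j i)) = 0] (mod p)) \<and> \<not> [c m' = 0] (mod p)"
        by blast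
    qed
    from bchoice[OF this] obtain cc where cc: "\<forall>j\<in>F. (\<forall>r<m'. [(\<Sum>i\<le>m'. cc j i * M r (g j i)) = 0] (mod p)) \<and> \<not> [cc j m' = 0] (mod p)"
      by blast
    define v where "v = (\<lambda>j l. \<Sum>i\<le>m'. if g j i = l then cc j i else 0)"
    have vker: "mat_vec_cong p m' m M (v j) (\<lambda>_. 0)" if j: "j \<in> F" for j
      unfolding mat_vec_cong_def
    proof (intro allI impI)
      fix r assume r: "r < m'"
      have glt: "g j i < m" if "i \<le> m'" for i
        using f km j Fsub that unfolding g_def by auto
      have "(\<Sum>l<m. M r l * v j l) = (\<Sum>l<m. \<Sum>i\<le>m'. if g j i = l then cc j i * M r l else 0)"
        unfolding v_def by (simp add: sum_distrib_left if_distrib mult.commute cong: if_cong)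
      also have "\<dots> = (\<Sum>i\<le>m'. \<Sum>l<m. if g j i = l then cc j i * M r l else 0)"
        by (rule sum.swap)
      also have "\<dots> = (\<Sum>i\<le>m'. cc j i * M r (g j i))"
        by (intro sum.cong) (auto simp: glt)
      finally show "[(\<Sum>l<m. M r l * v j l) = 0] (mod p)" using cc j r by simp
    qed
    have vF: "v j j' = (if j' = j then cc j m' else 0)" if "j \<in> F" "j' \<in> F" for j j'
    proof -
      have "v j j' = (\<Sum>i<m'. if g j i = j' then cc j i else 0) + (if g j m' = j' then cc j m' else 0)"
        unfolding v_def by (simp add: atMost_insert)
      also have "(\<Sum>i<m'. if g j i = j' then cc j i else 0) = 0"
      proof (rule sum.neutral, intro ballI)
        fix i assume "i \<in> {..<m'}"
        then have "g j i \<in> P" using km unfolding g_def P_def by auto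
        then show "(if g j i = j' then cc j i else 0) = 0" using that(2) unfolding F_def by auto
      qed
      finally show ?thesis by (simp add: g_def eq_commute)
    qed
    obtain e where e: "bij_betw e {0..<card F} F" using ex_bij_betw_nat_finite[OF finF] by blast
    have eF: "e t \<in> F" if "t < card F" for t using bij_betwE[OF e] that by auto
    have einj: "e t = e t' \<longleftrightarrow> t = t'" if "t < card F" "t' < card F" for t t'
      using inj_onD[OF bij_betw_imp_inj_on[OF e]] that by auto
    define vs where "vs = (\<lambda>t. v (e t))"
    have "lin_indep_mod p m vs (card F)"
      unfolding lin_indep_mod_def
    proof (intro allI impI)
      fix d :: "nat \<Rightarrow> int" and t0
      assume d: "\<forall>j<m. [(\<Sum>t<card F. d t * vs t j) = 0] (mod p)" and t0: "t0 < card F"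
      have "(\<Sum>t<card F. d t * vs t (e t0)) = (\<Sum>t<card F. if t = t0 then d t0 * cc (e t0) m' else 0)"
        by (intro sum.cong) (auto simp: vs_def vF eF t0 einj)
      also have "\<dots> = d t0 * cc (e t0) m'" using t0 by simp
      finally have "[d t0 * cc (e t0) m' = 0] (mod p)" using d eF[OF t0] Fsub by auto
      then show "[d t0 = 0] (mod p)" using nz_mult[OF p] cc eF[OF t0] by blast
    qed
    moreover have "\<forall>i<card F. mat_vec_cong p m' m M (vs i) (\<lambda>_. 0)" using vker eF vs_def by simp
    ultimately show ?thesis unfolding K_def by blast
  qed
  hence kd: "card F \<le> ker_dim_mod p m' m M" using finK Max_ge unfolding ker_dim_mod_def K_def by auto
  have "real (card S0) \<le> real (5^m * nat L ^ card F)" using cnt by linarith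
  also have "\<dots> = 5^m * real_of_int L ^ card F" using L by simp
  also have "\<dots> \<le> 5^m * real_of_int L ^ ker_dim_mod p m' m M"
    using L kd by (intro mult_left_mono power_increasing) auto
  finally show ?thesis unfolding S0_def .
qed


theorem lemma4p1:
  fixes m :: nat
  shows "(\<forall>(p::int) (m'::nat) (M::nat \<Rightarrow> nat \<Rightarrow> int) (L::int) (Ls::nat \<Rightarrow> int) (N::nat \<Rightarrow> int) (b::nat \<Rightarrow> int).
            prime p \<and> 1 \<le> L \<and> L \<le> p \<and> (\<forall>i<m. L \<le> Ls i \<and> Ls i \<le> 2 * L) \<longrightarrow>
            card (Ssol p m' m M b (box m N (\<lambda>i. N i + Ls i)))
              \<le> card (Ssol p m' m M (\<lambda>_. 0) (box m (\<lambda>i. - Ls i) Ls)))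
       \<and> (\<exists>C::real. \<forall>(p::int) (m'::nat) (M::nat \<Rightarrow> nat \<Rightarrow> int) (L::int) (Ls::nat \<Rightarrow> int).
            prime p \<and> 1 \<le> L \<and> L \<le> p \<and> (\<forall>i<m. L \<le> Ls i \<and> Ls i \<le> 2 * L)
            \<and> rank_mod p m' m M = min m' m \<longrightarrow>
            real (card (Ssol p m' m M (\<lambda>_. 0) (box m (\<lambda>i. - Ls i) Ls)))
              \<le> C * real_of_int L ^ ker_dim_mod p m' m M)"
proof (intro conjI allI impI)
  fix p :: int and m' M L Ls N b
  assume h: "prime p \<and> 1 \<le> L \<and> L \<le> p \<and> (\<forall>i<m. L \<le> Ls i \<and> Ls i \<le> 2 * L)"
  then have "\<forall>i<m. 0 \<le> Ls i" by (meson dual_order.trans zero_le_one)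
  then show "card (Ssol p m' m M b (box m N (\<lambda>i. N i + Ls i)))
              \<le> card (Ssol p m' m M (\<lambda>_. 0) (box m (\<lambda>i. - Ls i) Ls))" by (rule part1)
next
  show "\<exists>C::real. \<forall>(p::int) (m'::nat) (M::nat \<Rightarrow> nat \<Rightarrow> int) (L::int) (Ls::nat \<Rightarrow> int).
            prime p \<and> 1 \<le> L \<and> L \<le> p \<and> (\<forall>i<m. L \<le> Ls i \<and> Ls i \<le> 2 * L)
            \<and> rank_mod p m' m M = min m' m \<longrightarrow>
            real (card (Ssol p m' m M (\<lambda>_. 0) (box m (\<lambda>i. - Ls i) Ls)))
              \<le> C * real_of_int L ^ ker_dim_mod p m' m M"
  proof (rule exI[of _ "5^m"], intro allI impI)
    fix p :: int and m' M L Ls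
    assume h: "prime p \<and> 1 \<le> L \<and> L \<le> p \<and> (\<forall>i<m. L \<le> Ls i \<and> Ls i \<le> 2 * L)
            \<and> rank_mod p m' m M = min m' m"
    show "real (card (Ssol p m' m M (\<lambda>_. 0) (box m (\<lambda>i. - Ls i) Ls)))
              \<le> 5^m * real_of_int L ^ ker_dim_mod p m' m M"
      using part2[of p L m Ls m' M] h by blast
  qed
qed

end
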